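(* Let $n,k,l$ be positive integers with $1\le l\le k$ and $l\le n-k$. Then for every $x\in[0,1)$, $$\frac{1-\sum_{i=1}^{l}\binom{n-k}{l-i}x^{(n-k)-(l-i)}(1-x)^{l-i}}{1-\sum_{i=1}^{l}\binom{n}{l-i}x^{n-(l-i)}(1-x)^{l-i}}\ \ge\ \frac{\binom{n-k}{l}}{\binom{n}{l}}.$$
   Context: $\binom{m}{j}$ denotes the binomial coefficient. *)

theory Defs
  imports Complex_Main
begin

end

theory Submission
  imports Defs
begin

lemma term_step:
  fixes p q :: real
  shows "real (Suc N choose Suc i) * q^(N - i) * p^(Suc i) =
         q * (real (N choose Suc i) * q^(N - Suc i) * p^(Suc i)) + p * (real (N choose i) * q^(N-i) * p^i)"
proof (cases "i < N")
  case True
  then have "q^(N-i) = q * q^(N - Suc i)"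
    by (metis Suc_diff_Suc power_Suc)
  then show ?thesis by (simp add: algebra_simps)
next
  case False
  then have "N choose Suc i = 0" by simp
  then show ?thesis by (simp add: algebra_simps)
qed

lemma F_step:
  fixes p q :: real
  shows "(\<Sum>j<Suc L. real (Suc N choose j) * q^(Suc N - j) * p^j) =
    q * (\<Sum>j<Suc L. real (N choose j) * q^(N-j) * p^j) + p * (\<Sum>j<L. real (N choose j) * q^(N-j) * p^j)"
proof -
  have "(\<Sum>j<Suc L. real (Suc N choose j) * q^(Suc N - j) * p^j) =
     q^(Suc N) + (\<Sum>i<L. real (Suc N choose Suc i) * q^(N - i) * p^(Suc i))"
    by (subst sum.lessThan_Suc_shift) simp
  also have "\<dots> = q^(Suc N) + (\<Sum>i<L. q * (real (N choose Suc i) * q^(N - Suc i) * p^(Suc i)) + p * (real (N choose i) * q^(N-i) * p^i))"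
    using term_step by simp
  also have "\<dots> = q * (q^N + (\<Sum>i<L. real (N choose Suc i) * q^(N - Suc i) * p^(Suc i))) + p * (\<Sum>j<L. real (N choose j) * q^(N-j) * p^j)"
    by (simp add: sum.distrib sum_distrib_left algebra_simps)
  also have "q^N + (\<Sum>i<L. real (N choose Suc i) * q^(N - Suc i) * p^(Suc i)) = (\<Sum>j<Suc L. real (N choose j) * q^(N-j) * p^j)"
    by (subst sum.lessThan_Suc_shift) simp
  finally show ?thesis .
qed

lemma F_closed:
  fixes p q :: real
  assumes "p + q = 1"
  shows "1 - (\<Sum>j<Suc L. real (N choose j) * q^(N-j) * p^j) = p^(Suc L) * (\<Sum>k<N. real (k choose L) * q^(k - L))"
proof (induction N)
  case 0
  then show ?case by (subst sum.lessThan_Suc_shift) simp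
next
  case (Suc N)
  let ?F = "(\<Sum>j<Suc L. real (N choose j) * q^(N-j) * p^j)"
  let ?F' = "(\<Sum>j<L. real (N choose j) * q^(N-j) * p^j)"
  have sp: "?F = ?F' + real (N choose L) * q^(N-L) * p^L" by simp
  have "1 - (\<Sum>j<Suc L. real (Suc N choose j) * q^(Suc N - j) * p^j) = 1 - (q * ?F + p * ?F')"
    using F_step by simp
  also have "\<dots> = 1 - ?F + p^(Suc L) * (real (N choose L) * q^(N-L))"
  proof -
    have "q * ?F + p * ?F' = (q + p) * ?F - p * real (N choose L) * q^(N-L) * p^L"
      using sp by (simp add: algebra_simps)
    then show ?thesis using assms by (simp add: algebra_simps)
  qed
  also have "\<dots> = p^(Suc L) * (\<Sum>k<Suc N. real (k choose L) * q^(k - L))"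
    using Suc by (simp add: algebra_simps)
  finally show ?case .
qed

lemma reidx:
  fixes g :: "nat \<Rightarrow> real"
  shows "(\<Sum>i=1..l. g (l - i)) = (\<Sum>j<l. g j)"
  by (rule sum.reindex_bij_witness[of _ "\<lambda>j. l - j" "\<lambda>i. l - i"]) auto

lemma B_closed:
  shows "(\<Sum>k<Suc N. real (k choose L)) = real (Suc N choose Suc L)"
proof -
  have "(\<Sum>k\<le>N. k choose L) = Suc N choose Suc L" by (rule sum_choose_upper)
  then show ?thesis by (metis lessThan_Suc_atMost of_nat_sum)
qed

lemma split_sum:
  fixes f :: "nat \<Rightarrow> real"
  assumes "m \<le> n"
  shows "sum f {..<n} = sum f {..<m} + sum f {m..<n}"
  using assms by (metis atLeast0LessThan le0 sum.atLeastLessThan_concat)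

theorem lemma6:
  fixes n k l :: nat and x :: real
  assumes "0 < n" "0 < k" "1 \<le> l" "l \<le> k" "l \<le> n - k"
    and "0 \<le> x" "x < 1"
  shows "(1 - (\<Sum>i=1..l. real ((n - k) choose (l - i)) * x ^ ((n - k) - (l - i)) * (1 - x) ^ (l - i)))
         / (1 - (\<Sum>i=1..l. real (n choose (l - i)) * x ^ (n - (l - i)) * (1 - x) ^ (l - i)))
         \<ge> real ((n - k) choose l) / real (n choose l)"
proof -
  obtain L where lL: "l = Suc L" using assms(3) by (cases l) auto
  define m where "m = n - k"
  have mn: "m < n" "L < m" using assms unfolding m_def lL by auto
  define p where "p = 1 - x"
  have p: "p > 0" "p + x = 1" using assms p_def by auto
  define G where "G N = (\<Sum>k<N. real (k choose L) * x^(k - L))" for N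
  define B where "B N = (\<Sum>k<N. real (k choose L))" for N
  have num: "1 - (\<Sum>i=1..l. real (m choose (l - i)) * x ^ (m - (l - i)) * (1 - x) ^ (l - i)) = p^l * G m"
  proof -
    have r: "(\<Sum>i=1..l. real (m choose (l - i)) * x ^ (m - (l - i)) * (1 - x) ^ (l - i)) = (\<Sum>j<Suc L. real (m choose j) * x ^ (m - j) * p ^ j)"
      using reidx[of "\<lambda>j. real (m choose j) * x ^ (m - j) * (1 - x) ^ j" l] unfolding lL p_def .
    show ?thesis unfolding r using F_closed[OF p(2), where L=L and N=m] unfolding lL G_def .
  qed
  have den: "1 - (\<Sum>i=1..l. real (n choose (l - i)) * x ^ (n - (l - i)) * (1 - x) ^ (l - i)) = p^l * G n"
  proof -
    have r: "(\<Sum>i=1..l. real (n choose (l - i)) * x ^ (n - (l - i)) * (1 - x) ^ (l - i)) = (\<Sum>j<Suc L. real (n choose j) * x ^ (n - j) * p ^ j)"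
      using reidx[of "\<lambda>j. real (n choose j) * x ^ (n - j) * (1 - x) ^ j" l] unfolding lL p_def .
    show ?thesis unfolding r using F_closed[OF p(2), where L=L and N=n] unfolding lL G_def .
  qed
  have Bm: "B m = real (m choose l)"
    using B_closed[where N="m - 1" and L=L] mn unfolding B_def lL by (simp add: Suc_diff_1[of m] del: Suc_diff_1)
  have Bn: "B n = real (n choose l)"
    using B_closed[where N="n - 1" and L=L] mn unfolding B_def lL by (simp add: Suc_diff_1[of n] del: Suc_diff_1)
  have Gpos: "G N > 0" if "L < N" for N
  proof -
    have "G N = G L + (\<Sum>k\<in>{L..<N}. real (k choose L) * x^(k - L))"
      unfolding G_def by (rule split_sum) (use that in simp)
    moreover have "G L \<ge> 0" unfolding G_def using assms by (intro sum_nonneg) auto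
    moreover have "(\<Sum>k\<in>{L..<N}. real (k choose L) * x^(k - L)) \<ge> real (L choose L) * x^(L-L)"
      using that assms by (intro member_le_sum) auto
    ultimately show ?thesis by simp
  qed
  have Bpos: "B n > 0" using Bn mn unfolding lL by simp
  define c where "c = x^(m - L)"
  have c: "c \<ge> 0" using assms c_def by simp
  have G1: "G m \<ge> c * B m"
    unfolding G_def B_def c_def sum_distrib_left
  proof (intro sum_mono)
    fix j assume "j \<in> {..<m}"
    then have "x^(m-L) \<le> x^(j-L)" using assms by (intro power_decreasing) auto
    then show "x ^ (m - L) * real (j choose L) \<le> real (j choose L) * x ^ (j - L)"
      by (simp add: mult.commute mult_left_mono)
  qed
  define G' where "G' = (\<Sum>k\<in>{m..<n}. real (k choose L) * x^(k - L))"
  define B' where "B' = (\<Sum>k\<in>{m..<n}. real (k choose L))"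
  have G2: "G' \<le> c * B'"
    unfolding G'_def B'_def c_def sum_distrib_left
  proof (intro sum_mono)
    fix j assume "j \<in> {m..<n}"
    then have "x^(j-L) \<le> x^(m-L)" using assms by (intro power_decreasing) auto
    then show "real (j choose L) * x ^ (j - L) \<le> x ^ (m - L) * real (j choose L)"
      by (simp add: mult.commute mult_left_mono)
  qed
  have Gs: "G n = G m + G'" unfolding G_def G'_def by (rule split_sum) (use mn in simp)
  have Bs: "B n = B m + B'" unfolding B_def B'_def by (rule split_sum) (use mn in simp)
  have B'nn: "B' \<ge> 0" "B m \<ge> 0" unfolding B'_def B_def by (auto intro: sum_nonneg)
  have key: "G m * B n \<ge> G n * B m"
  proof -
    have "G m * B' \<ge> c * B m * B'" using G1 B'nn by (simp add: mult_right_mono)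
    moreover have "G' * B m \<le> c * B' * B m" using G2 B'nn by (simp add: mult_right_mono)
    ultimately show ?thesis unfolding Gs Bs by (simp add: algebra_simps)
  qed
  have Gn: "G n > 0" using Gpos mn by simp
  have "B m / B n \<le> G m / G n"
    using key Gn Bpos by (simp add: divide_simps mult.commute)
  also have "G m / G n = (p^l * G m) / (p^l * G n)" using p by simp
  finally show ?thesis using num den Bm Bn unfolding m_def by simp
qed

end
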